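(* Let $D_0, D_1, D_2$ be three mutually tangent disks such that $D_1$ and $D_2$ are inner disks of positive curvatures $B_1$ and $B_2$, and $D_0$ is an outer disk of negative curvature $B_0$ containing them. Let $\mathbf a = \mathrm{spin}(D_0,D_1)$ and $\mathbf b = \mathrm{spin}(D_0,D_2)$ be tangency spinors, viewed as vectors in $\mathbb R^2$, and let $M=[\mathbf a\ \mathbf b]$ be the $2\times 2$ matrix with columns $\mathbf a,\mathbf b$. Put $B = |\mathbf a\times\mathbf b| = |\det M|$. Then $$B_0=-B,\qquad B_1 = B+\|\mathbf a\|^2,\qquad B_2 = B+\|\mathbf b\|^2 .$$ Moreover, setting $$B_{3} = B+\|\mathbf a+\mathbf b\|^2 = B+\|\mathbf a\|^2+\|\mathbf b\|^2+2\,\mathbf a\cdot\mathbf b,\qquad B_{4} = B+\|\mathbf a-\mathbf b\|^2 = B+\|\mathbf a\|^2+\|\mathbf b\|^2-2\,\mathbf a\cdot\mathbf b,$$ both quadruples $(B_0,B_1,B_2,B_3)$ and $(B_0,B_1,B_2,B_4)$ satisfy the Descartes formula $2(A^2+B^2+C^2+D^2)=(A+B+C+D)^2$.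
   Context: A disk is the interior (inner disk) or the exterior (outer disk) of a circle; an inner disk of radius $r>0$ has curvature $1/r>0$, an outer disk bounded by a circle of radius $r$ is assigned signed radius $-r$ and curvature $-1/r<0$. Tangent disks are assumed not to overlap. Identify the plane with $\mathbb C\cong\mathbb R^2$. For an ordered pair $(A,B)$ of tangent disks with centers $c_A,c_B\in\mathbb C$ and signed radii $r_A,r_B$, the tangency spinor is $\mathrm{spin}(A,B)=\pm\sqrt{(c_B-c_A)/(r_Ar_B)}\in\mathbb C$, defined up to sign and regarded as the vector $(\mathrm{Re},\mathrm{Im})\in\mathbb R^2$. For $\mathbf a=(x,y)^T,\mathbf b=(x',y')^T\in\mathbb R^2$: $\mathbf a\cdot\mathbf b=xx'+yy'$, $\mathbf a\times\mathbf b=xy'-x'y=\det[\mathbf a\ \mathbf b]$, $\|\mathbf a\|^2=\mathbf a\cdot\mathbf a$. *)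

theory Defs
  imports "HOL-Analysis.Analysis"
begin

text \<open>A disk is encoded by its center (a complex number) and its signed radius:
  r > 0 for the inner disk of radius r, r < 0 for the outer disk bounded by the
  circle of radius -r.\<close>

type_synonym disk = "complex \<times> real"

definition center :: "disk \<Rightarrow> complex" where "center D = fst D"
definition sradius :: "disk \<Rightarrow> real" where "sradius D = snd D"
definition curvature :: "disk \<Rightarrow> real" where "curvature D = 1 / sradius D"

definition is_disk :: "disk \<Rightarrow> bool" where "is_disk D \<longleftrightarrow> sradius D \<noteq> 0"

text \<open>Tangent, non-overlapping disks: two inner disks are externally tangent;
  an inner disk is internally tangent to (contained in the circle of) an outer disk;
  two outer disks always overlap, hence are never tangent in this sense.\<close>

definition tangent_disks :: "disk \<Rightarrow> disk \<Rightarrow> bool" where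
  "tangent_disks A B \<longleftrightarrow>
     (let rA = sradius A; rB = sradius B; d = cmod (center A - center B) in
       (rA > 0 \<and> rB > 0 \<and> d = rA + rB) \<or>
       (rA < 0 \<and> rB > 0 \<and> rA + rB < 0 \<and> d = - rA - rB) \<or>
       (rA > 0 \<and> rB < 0 \<and> rA + rB < 0 \<and> d = - rA - rB))"

definition is_spin :: "disk \<Rightarrow> disk \<Rightarrow> complex \<Rightarrow> bool" where
  "is_spin A B s \<longleftrightarrow> s\<^sup>2 = (center B - center A) / complex_of_real (sradius A * sradius B)"

definition vdot :: "complex \<Rightarrow> complex \<Rightarrow> real" where
  "vdot a b = Re a * Re b + Im a * Im b"

definition vcross :: "complex \<Rightarrow> complex \<Rightarrow> real" where
  "vcross a b = Re a * Im b - Re b * Im a"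

definition vnorm2 :: "complex \<Rightarrow> real" where
  "vnorm2 a = vdot a a"

definition descartes :: "real \<Rightarrow> real \<Rightarrow> real \<Rightarrow> real \<Rightarrow> bool" where
  "descartes A B C D \<longleftrightarrow> 2 * (A\<^sup>2 + B\<^sup>2 + C\<^sup>2 + D\<^sup>2) = (A + B + C + D)\<^sup>2"

end

theory Submission
  imports Defs
begin

lemma lagr: "(vcross a b)\<^sup>2 = vnorm2 a * vnorm2 b - (vdot a b)\<^sup>2"
  unfolding vcross_def vnorm2_def vdot_def by (simp add: power2_eq_square algebra_simps)

lemma cross_sq: "(vcross a b)\<^sup>2 = (cmod (a\<^sup>2) * cmod (b\<^sup>2) - Re (cnj (a\<^sup>2) * b\<^sup>2)) / 2"
proof -
  have "cmod (a\<^sup>2) = vnorm2 a" unfolding vnorm2_def vdot_def norm_power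
    by (simp add: cmod_def power2_eq_square)
  moreover have "cmod (b\<^sup>2) = vnorm2 b" unfolding vnorm2_def vdot_def norm_power
    by (simp add: cmod_def power2_eq_square)
  ultimately show ?thesis unfolding vcross_def vnorm2_def vdot_def
    by (simp add: power2_eq_square algebra_simps)
qed

lemma norm2_eq: "vnorm2 a = cmod (a\<^sup>2)"
  unfolding vnorm2_def vdot_def norm_power by (simp add: cmod_def power2_eq_square)

lemma cos_law: "(cmod (u - v))\<^sup>2 = (cmod u)\<^sup>2 + (cmod v)\<^sup>2 - 2 * Re (cnj u * v)"
  unfolding cmod_power2 by (simp add: power2_eq_square algebra_simps)

theorem proposition3p1:
  fixes D0 D1 D2 :: disk and a b :: complex
  assumes "curvature D0 < 0" and "curvature D1 > 0" and "curvature D2 > 0"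
    and "tangent_disks D0 D1" and "tangent_disks D0 D2" and "tangent_disks D1 D2"
    and "is_spin D0 D1 a" and "is_spin D0 D2 b"
  shows "curvature D0 = - \<bar>vcross a b\<bar>
       \<and> curvature D1 = \<bar>vcross a b\<bar> + vnorm2 a
       \<and> curvature D2 = \<bar>vcross a b\<bar> + vnorm2 b
       \<and> descartes (curvature D0) (curvature D1) (curvature D2)
                   (\<bar>vcross a b\<bar> + vnorm2 (a + b))
       \<and> descartes (curvature D0) (curvature D1) (curvature D2)
                   (\<bar>vcross a b\<bar> + vnorm2 (a - b))
       \<and> \<bar>vcross a b\<bar> + vnorm2 (a + b) = \<bar>vcross a b\<bar> + vnorm2 a + vnorm2 b + 2 * vdot a b
       \<and> \<bar>vcross a b\<bar> + vnorm2 (a - b) = \<bar>vcross a b\<bar> + vnorm2 a + vnorm2 b - 2 * vdot a b"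
proof -
  define r0 where "r0 = sradius D0"
  define r1 where "r1 = sradius D1"
  define r2 where "r2 = sradius D2"
  define c0 where "c0 = center D0"
  define c1 where "c1 = center D1"
  define c2 where "c2 = center D2"
  have r0: "r0 < 0" using assms(1) unfolding curvature_def r0_def by (simp add: divide_less_0_iff)
  have r1: "r1 > 0" using assms(2) unfolding curvature_def r1_def by (simp add: zero_less_divide_iff)
  have r2: "r2 > 0" using assms(3) unfolding curvature_def r2_def by (simp add: zero_less_divide_iff)
  have t01: "cmod (c0 - c1) = - r0 - r1" using assms(4) r0 r1
    unfolding tangent_disks_def r0_def r1_def c0_def c1_def Let_def by auto
  have t02: "cmod (c0 - c2) = - r0 - r2" using assms(5) r0 r2
    unfolding tangent_disks_def r0_def r2_def c0_def c2_def Let_def by auto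
  have t12: "cmod (c1 - c2) = r1 + r2" using assms(6) r1 r2
    unfolding tangent_disks_def r1_def r2_def c1_def c2_def Let_def by auto
  define u where "u = c1 - c0"
  define v where "v = c2 - c0"
  have a2: "a\<^sup>2 = u / complex_of_real (r0 * r1)" using assms(7)
    unfolding is_spin_def u_def c0_def c1_def r0_def r1_def by simp
  have b2: "b\<^sup>2 = v / complex_of_real (r0 * r2)" using assms(8)
    unfolding is_spin_def v_def c0_def c2_def r0_def r2_def by simp
  have nu: "cmod u = - r0 - r1" using t01 unfolding u_def by (simp add: norm_minus_commute)
  have nv: "cmod v = - r0 - r2" using t02 unfolding v_def by (simp add: norm_minus_commute)
  have nuv: "cmod (u - v) = r1 + r2" using t12 unfolding u_def v_def by simp
  have k1: "r0 * r1 < 0" using r0 r1 by (simp add: mult_neg_pos)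
  have k2: "r0 * r2 < 0" using r0 r2 by (simp add: mult_neg_pos)
  have p: "vnorm2 a = 1 / r1 + 1 / r0"
  proof -
    have "vnorm2 a = cmod u / \<bar>r0 * r1\<bar>" unfolding norm2_eq a2 norm_divide norm_of_real by simp
    also have "\<dots> = (- r0 - r1) / (- (r0 * r1))" using nu k1 by simp
    finally show ?thesis using r0 r1 by (simp add: field_simps)
  qed
  have q: "vnorm2 b = 1 / r2 + 1 / r0"
  proof -
    have "vnorm2 b = cmod v / \<bar>r0 * r2\<bar>" unfolding norm2_eq b2 norm_divide norm_of_real by simp
    also have "\<dots> = (- r0 - r2) / (- (r0 * r2))" using nv k2 by simp
    finally show ?thesis using r0 r2 by (simp add: field_simps)
  qed
  have re: "Re (cnj u * v) = ((cmod u)\<^sup>2 + (cmod v)\<^sup>2 - (cmod (u - v))\<^sup>2) / 2"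
    using cos_law[of u v] by simp
  have re2: "Re (cnj (a\<^sup>2) * b\<^sup>2) = Re (cnj u * v) / (r0 * r1 * (r0 * r2))"
    unfolding a2 b2 by (simp add: complex_cnj_divide Re_divide_of_real mult_ac)
  have cs: "(vcross a b)\<^sup>2 = (1 / r0)\<^sup>2"
  proof -
    have m1: "cmod (a\<^sup>2) = (- r0 - r1) / (- (r0 * r1))" unfolding a2 norm_divide norm_of_real using nu k1 by simp
    have m2: "cmod (b\<^sup>2) = (- r0 - r2) / (- (r0 * r2))" unfolding b2 norm_divide norm_of_real using nv k2 by simp
    show ?thesis unfolding cross_sq m1 m2 re2 re nu nv nuv using r0 r1 r2
      by (simp add: field_simps power2_eq_square)
  qed
  have B: "\<bar>vcross a b\<bar> = - 1 / r0"
  proof -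
    have "\<bar>vcross a b\<bar> = \<bar>1 / r0\<bar>" using cs by (metis power2_eq_iff abs_of_nonneg abs_ge_zero abs_minus_cancel abs_power2 power2_abs)
    thus ?thesis using r0 by simp
  qed
  have C0: "curvature D0 = 1 / r0" unfolding curvature_def r0_def ..
  have C1: "curvature D1 = 1 / r1" unfolding curvature_def r1_def ..
  have C2: "curvature D2 = 1 / r2" unfolding curvature_def r2_def ..
  have ep: "vnorm2 (a + b) = vnorm2 a + vnorm2 b + 2 * vdot a b"
    unfolding vnorm2_def vdot_def by (simp add: algebra_simps)
  have em: "vnorm2 (a - b) = vnorm2 a + vnorm2 b - 2 * vdot a b"
    unfolding vnorm2_def vdot_def by (simp add: algebra_simps)
  define BB where "BB = \<bar>vcross a b\<bar>"
  have L: "BB\<^sup>2 = vnorm2 a * vnorm2 b - (vdot a b)\<^sup>2" unfolding BB_def using lagr by simp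
  have D: "descartes (- BB) (BB + P) (BB + Q) (BB + P + Q + s * 2 * d)"
    if "BB\<^sup>2 = P * Q - d\<^sup>2" "s\<^sup>2 = 1" for P Q d s :: real
    unfolding descartes_def using that by (simp add: power2_eq_square algebra_simps)
  have D1: "descartes (- BB) (BB + vnorm2 a) (BB + vnorm2 b) (BB + vnorm2 (a + b))"
    using D[OF L, of 1] ep by (simp add: add.assoc)
  have D2: "descartes (- BB) (BB + vnorm2 a) (BB + vnorm2 b) (BB + vnorm2 (a - b))"
    proof -
    have "BB + vnorm2 (a - b) = BB + vnorm2 a + vnorm2 b + (-1) * 2 * vdot a b" using em by simp
    thus ?thesis using D[OF L, of "-1"] by (simp only:) simp
  qed
  have E0: "curvature D0 = - BB" unfolding BB_def B C0 by simp
  have E1: "curvature D1 = BB + vnorm2 a" unfolding BB_def B C1 p using r0 r1 by (simp add: field_simps)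
  have E2: "curvature D2 = BB + vnorm2 b" unfolding BB_def B C2 q using r0 r2 by (simp add: field_simps)
  show ?thesis using E0 E1 E2 D1 D2 ep em unfolding BB_def by simp
qed

end
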